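(* Let $n\ge 2$ be an integer, let $a_1,\dots,a_n>0$ with $\sum_{k=1}^n a_k=1$, and let $c_k,d_k,\beta_k\in\mathbb{R}$ ($k=1,\dots,n$) with $\max_{1\le k\le n}|d_k|<1$. Put $\alpha_1=0$, $\alpha_k=\sum_{j=1}^{k-1}a_j$ for $k=2,\dots,n+1$, and $S_k(x)=a_kx+\alpha_k$. Let $f\in C[0;1]$ be a continuous function satisfying $f=G(f)$, where $$[G(f)](t)=\sum_{k=1}^n\bigl(d_k f(S_k^{-1}(t))+c_k t+\beta_k\bigr)\chi_{I_k}(t),\qquad I_1=[0;\alpha_2],\ I_k=(\alpha_k;\alpha_{k+1}]\ (k\ge2).$$ Suppose there is an index $i$ with $|d_i|>a_i$. Then for every $\alpha\in(0;1]$ satisfying $$\alpha\le\min_{1\le j\le n}\frac{\ln|d_j|}{\ln a_j}$$ there exists a constant $C\ge0$ such that $|f(x)-f(y)|\le C|x-y|^{\alpha}$ for all $x,y\in[0;1]$ (i.e. $f$ satisfies the Hölder condition with exponent $\alpha$).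
   Context: Here $\chi_I$ is the indicator function of the interval $I$. A continuous function $f$ with $G(f)=f$ is called an (affine) self-similar function with self-similarity parameters $\{a_k\},\{c_k\},\{d_k\},\{\beta_k\}$. Convention: if $d_j=0$, then $\ln|d_j|=-\infty$ and the ratio $\ln|d_j|/\ln a_j$ is interpreted as $+\infty$. A function $f$ on $[0;1]$ satisfies the Hölder condition with exponent $\alpha\in(0;1]$ if $\sup_{x\ne y}|f(x)-f(y)|/|x-y|^\alpha<\infty$. *)

theory Defs
  imports "HOL-Analysis.Analysis"
begin

definition ss_alpha :: "(nat \<Rightarrow> real) \<Rightarrow> nat \<Rightarrow> real" where
  "ss_alpha a k = (\<Sum>j=1..<k. a j)"

definition ss_I :: "(nat \<Rightarrow> real) \<Rightarrow> nat \<Rightarrow> real set" where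
  "ss_I a k = (if k = 1 then {0 .. ss_alpha a 2} else {ss_alpha a k <.. ss_alpha a (Suc k)})"

definition ss_S :: "(nat \<Rightarrow> real) \<Rightarrow> nat \<Rightarrow> real \<Rightarrow> real" where
  "ss_S a k x = a k * x + ss_alpha a k"

definition ss_S_inv :: "(nat \<Rightarrow> real) \<Rightarrow> nat \<Rightarrow> real \<Rightarrow> real" where
  "ss_S_inv a k t = (t - ss_alpha a k) / a k"

definition ss_G :: "nat \<Rightarrow> (nat \<Rightarrow> real) \<Rightarrow> (nat \<Rightarrow> real) \<Rightarrow> (nat \<Rightarrow> real) \<Rightarrow> (nat \<Rightarrow> real)
                    \<Rightarrow> (real \<Rightarrow> real) \<Rightarrow> real \<Rightarrow> real" where
  "ss_G n a c d \<beta> f t =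
     (\<Sum>k=1..n. (d k * f (ss_S_inv a k t) + c k * t + \<beta> k) * indicator (ss_I a k) t)"

end

theory Submission
  imports Defs
begin

locale ssf =
  fixes n :: nat and a c d \<beta> :: "nat \<Rightarrow> real" and f :: "real \<Rightarrow> real"
  assumes n2: "n \<ge> 2"
    and apos: "\<forall>k\<in>{1..n}. a k > 0"
    and asum: "(\<Sum>k=1..n. a k) = 1"
    and dlt: "\<forall>k\<in>{1..n}. \<bar>d k\<bar> < 1"
    and fcont: "continuous_on {0..1} f"
    and ffix: "\<forall>t\<in>{0..1}. f t = ss_G n a c d \<beta> f t"
begin

abbreviation al where "al k \<equiv> ss_alpha a k"

lemma apos': "1 \<le> k \<Longrightarrow> k \<le> n \<Longrightarrow> a k > 0" using apos by auto
lemma anneg: "1 \<le> k \<Longrightarrow> k \<le> n \<Longrightarrow> a k \<ge> 0" using apos' by (simp add: less_imp_le)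

lemma al1: "al 1 = 0" by (simp add: ss_alpha_def)

lemma alSuc: "k \<ge> 1 \<Longrightarrow> al (Suc k) = al k + a k"
  by (simp add: ss_alpha_def sum.atLeastLessThan_Suc)

lemma alend: "al (Suc n) = 1"
  using asum by (simp add: ss_alpha_def atLeastLessThanSuc_atLeastAtMost)

lemma al_split: assumes "1 \<le> j" "j \<le> k" shows "al k = al j + (\<Sum>i=j..<k. a i)"
  unfolding ss_alpha_def using assms sum.atLeastLessThan_concat[of 1 j k a] by simp

lemma al_ge0: assumes "k \<le> Suc n" shows "al k \<ge> 0"
  unfolding ss_alpha_def using assms by (intro sum_nonneg anneg) auto

lemma al_mono: assumes "j \<le> k" "k \<le> Suc n" shows "al j \<le> al k"
proof (cases "j \<ge> 1")
  case True
  have "(\<Sum>i=j..<k. a i) \<ge> 0"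
    using assms True by (intro sum_nonneg anneg) auto
  then show ?thesis using al_split[OF True assms(1)] by simp
next
  case False
  then have "al j = 0" by (simp add: ss_alpha_def)
  then show ?thesis using al_ge0 assms by simp
qed

lemma al_strict: assumes "j < k" "k \<le> Suc n" "1 \<le> j" shows "al j < al k"
proof -
  have "al (Suc j) \<le> al k" using al_mono assms by simp
  moreover have "al (Suc j) = al j + a j" using alSuc assms by simp
  moreover have "a j > 0" using apos assms by auto
  ultimately show ?thesis by simp
qed

lemma al_le1: assumes "k \<le> Suc n" shows "al k \<le> 1"
  using al_mono[OF assms] alend by simp

lemma a_lt1: assumes "k \<in> {1..n}" shows "a k < 1"
proof -
  obtain j where j: "j \<in> {1..n}" "j \<noteq> k"
  proof (cases "k = 1")
    case True then show ?thesis using that[of 2] n2 by auto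
  next
    case False then show ?thesis using that[of 1] n2 by auto
  qed
  have "(\<Sum>i=1..n. a i) = a k + (\<Sum>i\<in>{1..n}-{k}. a i)"
    using assms by (simp add: sum.remove)
  moreover have "(\<Sum>i\<in>{1..n}-{k}. a i) = a j + (\<Sum>i\<in>{1..n}-{k}-{j}. a i)"
    using j by (simp add: sum.remove)
  moreover have "(\<Sum>i\<in>{1..n}-{k}-{j}. a i) \<ge> 0" by (intro sum_nonneg anneg) auto
  moreover have "a j > 0" using apos j by auto
  ultimately show ?thesis using asum by linarith
qed


lemma I_sub: assumes "1 \<le> k" "k \<le> n" shows "ss_I a k \<subseteq> {0..1}"
  using al_ge0[of k] al_le1[of "Suc k"] al_le1[of 2] assms n2 unfolding ss_I_def by auto

lemma S_in_I: assumes "1 \<le> k" "k \<le> n" "0 < t \<or> k = 1" "0 \<le> t" "t \<le> 1"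
  shows "ss_S a k t \<in> ss_I a k"
proof -
  have ak: "a k > 0" using apos' assms by simp
  have "a k * t \<le> a k" using ak assms by (simp add: mult_le_cancel_left1)
  moreover have "0 \<le> a k * t" using ak assms by simp
  moreover have "0 < t \<Longrightarrow> 0 < a k * t" using ak by simp
  ultimately show ?thesis using assms alSuc[of k] al1
    unfolding ss_I_def ss_S_def by (auto simp: numeral_2_eq_2)
qed

lemma I_disj: assumes "1 \<le> k" "k \<le> n" "1 \<le> j" "j \<le> n" "j \<noteq> k" "t \<in> ss_I a k"
  shows "t \<notin> ss_I a j"
proof (cases "j < k")
  case True
  then have "al (Suc j) \<le> al k" using al_mono assms by simp
  moreover have "t > al k" using assms True unfolding ss_I_def by auto
  ultimately show ?thesis unfolding ss_I_def using True assms by (auto simp: numeral_2_eq_2)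
next
  case False
  then have jk: "k < j" using assms by simp
  then have "al (Suc k) \<le> al j" using al_mono assms by simp
  moreover have "t \<le> al (Suc k)" using assms unfolding ss_I_def by (auto simp: numeral_2_eq_2 split: if_splits)
  ultimately show ?thesis unfolding ss_I_def using jk assms by auto
qed

lemma G_eval: assumes "1 \<le> k" "k \<le> n" "t \<in> ss_I a k"
  shows "ss_G n a c d \<beta> f t = d k * f (ss_S_inv a k t) + c k * t + \<beta> k"
proof -
  let ?g = "\<lambda>j. (d j * f (ss_S_inv a j t) + c j * t + \<beta> j) * indicator (ss_I a j) t"
  have "sum ?g {1..n} = ?g k + sum ?g ({1..n} - {k})"
    using assms by (intro sum.remove) auto
  moreover have "sum ?g ({1..n} - {k}) = 0"
    using I_disj[OF assms(1,2) _ _ _ assms(3)] by (intro sum.neutral) auto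
  moreover have "ss_G n a c d \<beta> f t = sum ?g {1..n}" by (simp only: ss_G_def)
  moreover have "?g k = d k * f (ss_S_inv a k t) + c k * t + \<beta> k"
    using assms(3) by (simp add: indicator_def)
  ultimately show ?thesis by simp
qed

lemma feq_pos: assumes "1 \<le> k" "k \<le> n" "0 < t \<or> k = 1" "0 \<le> t" "t \<le> 1"
  shows "f (ss_S a k t) = d k * f t + c k * ss_S a k t + \<beta> k"
proof -
  have m: "ss_S a k t \<in> ss_I a k" using S_in_I assms by blast
  then have "ss_S a k t \<in> {0..1}" using I_sub assms by blast
  then have "f (ss_S a k t) = ss_G n a c d \<beta> f (ss_S a k t)" using ffix by blast
  also have "\<dots> = d k * f (ss_S_inv a k (ss_S a k t)) + c k * ss_S a k t + \<beta> k"
    using G_eval assms m by blast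
  also have "ss_S_inv a k (ss_S a k t) = t" using apos'[of k] assms
    unfolding ss_S_def ss_S_inv_def by (simp add: field_simps)
  finally show ?thesis .
qed

lemma S_range: assumes "1 \<le> k" "k \<le> n" "0 \<le> t" "t \<le> 1" shows "ss_S a k t \<in> {0..1}"
proof -
  have ak: "a k > 0" using apos' assms by simp
  have "a k * t \<le> a k" using ak assms by (simp add: mult_le_cancel_left1)
  moreover have "0 \<le> a k * t" using ak assms by simp
  moreover have "al k \<ge> 0" using al_ge0 assms by simp
  moreover have "al (Suc k) \<le> 1" using al_le1 assms by simp
  moreover have "al (Suc k) = al k + a k" using alSuc assms by simp
  ultimately show ?thesis unfolding ss_S_def by simp
qed

lemma feq: assumes "1 \<le> k" "k \<le> n" "0 \<le> t" "t \<le> 1"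
  shows "f (ss_S a k t) = d k * f t + c k * ss_S a k t + \<beta> k"
proof (cases "0 < t \<or> k = 1")
  case True then show ?thesis using feq_pos assms by blast
next
  case False
  then have t0: "t = 0" using assms by simp
  define g where "g = (\<lambda>t. f (ss_S a k t) - (d k * f t + c k * ss_S a k t + \<beta> k))"
  have cS: "continuous_on {0..1} (ss_S a k)" unfolding ss_S_def by (intro continuous_intros)
  have img: "ss_S a k ` {0..1} \<subseteq> {0..1}" using S_range assms(1,2) by auto
  have cfS: "continuous_on {0..1} (\<lambda>t. f (ss_S a k t))"
    using continuous_on_compose[OF cS continuous_on_subset[OF fcont img]] by (simp add: o_def)
  have cl: "closure {0<..1::real} = {0..1}" by simp
  have "continuous_on {0..1} g" unfolding g_def
    by (intro continuous_on_diff continuous_on_add continuous_on_mult continuous_on_const cfS fcont cS)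
  then have "continuous_on (closure {0<..1}) g" by (simp only: cl)
  moreover have "\<And>x. x \<in> {0<..1} \<Longrightarrow> g x = 0" unfolding g_def
  proof -
    fix x :: real assume "x \<in> {0<..1}"
    then show "f (ss_S a k x) - (d k * f x + c k * ss_S a k x + \<beta> k) = 0"
      using feq_pos[OF assms(1,2)] by simp
  qed
  moreover have "(0::real) \<in> closure {0<..1}" by simp
  ultimately have "g 0 = 0" by (rule continuous_constant_on_closure)
  then show ?thesis using t0 unfolding g_def by simp
qed

end

locale ssh = ssf +
  fixes \<alpha> M D m :: real
  assumes alpha_pos: "0 < \<alpha>" and alpha_lt1: "\<alpha> < 1"
    and dle: "\<forall>k\<in>{1..n}. \<bar>d k\<bar> \<le> a k powr \<alpha>"
    and Mb: "\<forall>x\<in>{0..1}. \<bar>f x\<bar> \<le> M"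
    and D0: "0 \<le> D" and D1: "D < 1" and Dd: "\<forall>k\<in>{1..n}. \<bar>d k\<bar> \<le> D"
    and m0: "0 < m" and ma: "\<forall>k\<in>{1..n}. m \<le> a k"
begin

definition E where "E = (\<Sum>k=1..n. \<bar>c k\<bar> / (a k powr (\<alpha> - 1) - 1))"
definition cs where "cs = (\<Sum>k=1..n. \<bar>c k\<bar>)"
definition phi where "phi C h = C * h powr \<alpha> - E * h"

lemma P_gt1: assumes "1 \<le> k" "k \<le> n" shows "a k powr (\<alpha> - 1) > 1"
proof -
  have "a k > 0" "a k < 1" using apos' a_lt1 assms by auto
  then have "1 / a k > 1" by simp
  then have "(1 / a k) powr 0 < (1 / a k) powr (1 - \<alpha>)" using alpha_lt1
    by (intro powr_less_mono) auto
  then have "(1 / a k) powr (1 - \<alpha>) > 1" using \<open>a k > 0\<close> by simp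
  moreover have "(1 / a k) powr (1 - \<alpha>) = a k powr (\<alpha> - 1)"
  proof -
    have "(1 / a k) powr (1 - \<alpha>) = 1 / a k powr (1 - \<alpha>)"
      using \<open>a k > 0\<close> by (simp add: powr_divide)
    also have "\<dots> = a k powr (- (1 - \<alpha>))" by (simp only: powr_minus divide_inverse mult_1)
    finally show ?thesis by simp
  qed
  ultimately show ?thesis by simp
qed

lemma E_ge: assumes "1 \<le> k" "k \<le> n" shows "E * (a k powr (\<alpha> - 1) - 1) \<ge> \<bar>c k\<bar>"
proof -
  have pos: "a k powr (\<alpha> - 1) - 1 > 0" using P_gt1 assms by simp
  have "\<bar>c k\<bar> / (a k powr (\<alpha> - 1) - 1) \<le> E" unfolding E_def
    using assms pos P_gt1
    by (intro member_le_sum) (auto intro!: divide_nonneg_pos)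
  then show ?thesis using pos by (simp add: divide_le_eq mult.commute)
qed

lemma E0: "E \<ge> 0" unfolding E_def using P_gt1
  by (intro sum_nonneg divide_nonneg_pos) auto

lemma cs_ge: assumes "1 \<le> k" "k \<le> n" shows "\<bar>c k\<bar> \<le> cs"
  unfolding cs_def using assms by (intro member_le_sum) auto

lemma core: assumes C: "C \<ge> E + cs" and k: "1 \<le> k" "k \<le> n" and h: "0 \<le> h" "h \<le> a k"
  shows "\<bar>d k\<bar> * phi C (h / a k) + \<bar>c k\<bar> * h \<le> phi C h"
proof -
  have ak: "a k > 0" "a k < 1" using apos' a_lt1 k by auto
  define A where "A = a k powr \<alpha>"
  have A0: "A > 0" using ak unfolding A_def by simp
  define lam where "lam = \<bar>d k\<bar> / A"
  have l0: "0 \<le> lam" unfolding lam_def using A0 by simp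
  have l1: "lam \<le> 1" unfolding lam_def using A0 dle k by (simp add: A_def)
  have dl: "\<bar>d k\<bar> = lam * A" unfolding lam_def using A0 by simp
  define w where "w = h powr \<alpha>"
  have h1: "h \<le> 1" using h ak by simp
  have wh: "h \<le> w" unfolding w_def
    using powr_mono'[of \<alpha> 1 h] alpha_lt1 h h1 by (cases "h = 0") auto
  have uw: "(h / a k) powr \<alpha> = w / A" unfolding w_def A_def using h ak by (simp add: powr_divide)
  define P where "P = a k powr (\<alpha> - 1)"
  have PA: "P = A / a k" unfolding P_def A_def using ak by (simp add: powr_diff)
  have EP: "E * (P - 1) \<ge> \<bar>c k\<bar>" unfolding P_def using E_ge k by simp
  have Cc: "C - E - \<bar>c k\<bar> \<ge> 0" using C cs_ge[OF k] by simp
  have C0: "C \<ge> 0" using Cc E0 by simp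
  have lhs: "\<bar>d k\<bar> * phi C (h / a k) + \<bar>c k\<bar> * h = lam * C * w - lam * E * P * h + \<bar>c k\<bar> * h"
    unfolding phi_def uw dl PA using A0 ak by (simp add: field_simps)
  have t1: "(1 - lam) * C * (w - h) \<ge> 0" using l1 C0 wh by simp
  have t2: "h * ((1 - lam) * (C - E - \<bar>c k\<bar>) + lam * (E * (P - 1) - \<bar>c k\<bar>)) \<ge> 0"
    using h l0 l1 Cc EP by (intro mult_nonneg_nonneg add_nonneg_nonneg) auto
  have eq: "phi C h - (lam * C * w - lam * E * P * h + \<bar>c k\<bar> * h)
     = (1 - lam) * C * (w - h) + h * ((1 - lam) * (C - E - \<bar>c k\<bar>) + lam * (E * (P - 1) - \<bar>c k\<bar>))"
    unfolding phi_def w_def by (simp add: algebra_simps)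
  show ?thesis using lhs eq t1 t2 by linarith
qed

lemma phi_ge: assumes "C \<ge> E" "0 \<le> h" "h \<le> 1" shows "phi C h \<ge> (C - E) * h powr \<alpha>"
proof -
  have "h \<le> h powr \<alpha>" using powr_mono'[of \<alpha> 1 h] alpha_lt1 assms by (cases "h = 0") auto
  then have "E * h \<le> E * h powr \<alpha>" using E0 by (simp add: mult_left_mono)
  then show ?thesis unfolding phi_def by (simp add: algebra_simps)
qed

lemma phi_nonneg: assumes "C \<ge> E" "0 \<le> h" "h \<le> 1" shows "phi C h \<ge> 0"
  using phi_ge[OF assms] assms by (smt (verit) mult_nonneg_nonneg powr_ge_zero)

lemma phi_big: assumes "(C - E) * m powr \<alpha> \<ge> 2 * M" "C \<ge> E" "m \<le> h" "h \<le> 1"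
  shows "phi C h \<ge> 2 * M"
proof -
  have "m powr \<alpha> \<le> h powr \<alpha>" using m0 assms alpha_pos by (intro powr_mono2) auto
  then have "(C - E) * m powr \<alpha> \<le> (C - E) * h powr \<alpha>" using assms by (intro mult_left_mono) auto
  then show ?thesis using phi_ge[of C h] assms m0 by linarith
qed

lemma fdiff: assumes k: "1 \<le> k" "k \<le> n" and uv: "u \<in> {0..1}" "v \<in> {0..1}"
  shows "f (ss_S a k u) - f (ss_S a k v) = d k * (f u - f v) + c k * (a k * (u - v))"
  using feq[OF k, of u] feq[OF k, of v] uv unfolding ss_S_def by (simp add: algebra_simps)

lemma scale: assumes C: "C \<ge> E + cs" and k: "1 \<le> k" "k \<le> n" and uv: "u \<in> {0..1}" "v \<in> {0..1}"
  and e: "e \<ge> 0" and hyp: "\<bar>f u - f v\<bar> \<le> phi C \<bar>u - v\<bar> + e"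
  shows "\<bar>f (ss_S a k u) - f (ss_S a k v)\<bar> \<le> phi C (a k * \<bar>u - v\<bar>) + D * e"
proof -
  have ak: "a k > 0" "a k < 1" using apos' a_lt1 k by auto
  define h where "h = a k * \<bar>u - v\<bar>"
  have h0: "0 \<le> h" unfolding h_def using ak by simp
  have huv: "\<bar>u - v\<bar> \<le> 1" using uv by auto
  have hak: "h \<le> a k" unfolding h_def using ak huv by (simp add: mult_left_le)
  have hdiv: "h / a k = \<bar>u - v\<bar>" unfolding h_def using ak by simp
  have "\<bar>f (ss_S a k u) - f (ss_S a k v)\<bar> \<le> \<bar>d k\<bar> * \<bar>f u - f v\<bar> + \<bar>c k\<bar> * h"
    unfolding fdiff[OF k uv] h_def using ak
    by (simp add: abs_mult order_trans[OF abs_triangle_ineq] )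
  also have "\<dots> \<le> \<bar>d k\<bar> * (phi C \<bar>u - v\<bar> + e) + \<bar>c k\<bar> * h"
    using hyp by (simp add: mult_left_mono)
  also have "\<dots> = (\<bar>d k\<bar> * phi C (h / a k) + \<bar>c k\<bar> * h) + \<bar>d k\<bar> * e"
    unfolding hdiv by (simp add: algebra_simps)
  also have "\<dots> \<le> phi C h + D * e"
    using core[OF C k h0 hak] Dd k e by (intro add_mono mult_right_mono) auto
  finally show ?thesis unfolding h_def .
qed

lemma f2M: assumes "x \<in> {0..1}" "y \<in> {0..1}" shows "\<bar>f x - f y\<bar> \<le> 2 * M"
  using Mb assms by (smt (verit))

lemma M0: "M \<ge> 0" using Mb by force

lemma onesided_N: assumes C: "C \<ge> E + cs" and Cb: "(C - E) * m powr \<alpha> \<ge> 2 * M"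
  shows "\<forall>t\<in>{0..1}. \<bar>f t - f 0\<bar> \<le> phi C t + 2 * M * D ^ N \<and> \<bar>f t - f 1\<bar> \<le> phi C (1 - t) + 2 * M * D ^ N"
proof (induction N)
  case 0
  have CE: "C \<ge> E" using C cs_def by (smt (verit) sum_nonneg abs_ge_zero)
  show ?case
  proof
    fix t :: real assume t: "t \<in> {0..1}"
    have "\<bar>f t - f 0\<bar> \<le> 2 * M" "\<bar>f t - f 1\<bar> \<le> 2 * M" using f2M t by auto
    moreover have "phi C t \<ge> 0" "phi C (1 - t) \<ge> 0" using phi_nonneg[OF CE] t by auto
    ultimately show "\<bar>f t - f 0\<bar> \<le> phi C t + 2 * M * D ^ 0 \<and> \<bar>f t - f 1\<bar> \<le> phi C (1 - t) + 2 * M * D ^ 0"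
      by simp
  qed
next
  case (Suc N)
  have CE: "C \<ge> E" using C cs_def by (smt (verit) sum_nonneg abs_ge_zero)
  have eN: "2 * M * D ^ N \<ge> 0" using M0 D0 by simp
  have eS: "D * (2 * M * D ^ N) = 2 * M * D ^ Suc N" by simp
  have eS0: "2 * M * D ^ Suc N \<ge> 0" using M0 D0 by simp
  have n1: "1 \<le> n" using n2 by simp
  show ?case
  proof
    fix t :: real assume t: "t \<in> {0..1}"
    have A: "\<bar>f t - f 0\<bar> \<le> phi C t + 2 * M * D ^ Suc N"
    proof (cases "t \<le> a 1")
      case True
      have a1: "a 1 > 0" using apos' n1 by simp
      define u where "u = t / a 1"
      have u: "u \<in> {0..1}" unfolding u_def using t True a1 by auto
      have "\<bar>f u - f 0\<bar> \<le> phi C \<bar>u - 0\<bar> + 2 * M * D ^ N" using Suc u by auto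
      from scale[OF C _ n1 u _ eN this] have
        "\<bar>f (ss_S a 1 u) - f (ss_S a 1 0)\<bar> \<le> phi C (a 1 * \<bar>u - 0\<bar>) + D * (2 * M * D ^ N)" by simp
      moreover have "ss_S a 1 u = t" "ss_S a 1 0 = 0" "a 1 * \<bar>u - 0\<bar> = t"
        unfolding ss_S_def u_def using al1 a1 t by auto
      ultimately show ?thesis using eS by simp
    next
      case False
      then have "m \<le> t" using ma n1 by force
      then have "phi C t \<ge> 2 * M" using phi_big[OF Cb CE] t by auto
      moreover have "\<bar>f t - f 0\<bar> \<le> 2 * M" using f2M[of t 0] t by simp
      ultimately show ?thesis using eS0 by linarith
    qed
    have B: "\<bar>f t - f 1\<bar> \<le> phi C (1 - t) + 2 * M * D ^ Suc N"
    proof (cases "1 - t \<le> a n")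
      case True
      have an: "a n > 0" using apos' n1 by simp
      have aln: "al n = 1 - a n" using alSuc[OF n1] alend by simp
      define u where "u = (t - al n) / a n"
      have u: "u \<in> {0..1}" unfolding u_def aln using t True an by (auto simp: field_simps)
      have "\<bar>u - 1\<bar> = 1 - u" using u by auto
      then have "\<bar>f u - f 1\<bar> \<le> phi C \<bar>u - 1\<bar> + 2 * M * D ^ N" using Suc u
        by simp
      from scale[OF C n1 _ u _ eN this] have
        "\<bar>f (ss_S a n u) - f (ss_S a n 1)\<bar> \<le> phi C (a n * \<bar>u - 1\<bar>) + D * (2 * M * D ^ N)" by simp
      moreover have "ss_S a n u = t" "ss_S a n 1 = 1" "a n * \<bar>u - 1\<bar> = 1 - t"
        unfolding ss_S_def u_def aln using an t by (auto simp: field_simps abs_if)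
      ultimately show ?thesis using eS by simp
    next
      case False
      then have "m \<le> 1 - t" using ma n1 by force
      then have "phi C (1 - t) \<ge> 2 * M" using phi_big[OF Cb CE] t by auto
      moreover have "\<bar>f t - f 1\<bar> \<le> 2 * M" using f2M[of t 1] t by simp
      ultimately show ?thesis using eS0 by linarith
    qed
    show "\<bar>f t - f 0\<bar> \<le> phi C t + 2 * M * D ^ Suc N \<and> \<bar>f t - f 1\<bar> \<le> phi C (1 - t) + 2 * M * D ^ Suc N"
      using A B by simp
  qed
qed

lemma lim_err: assumes "\<And>N. X \<le> Y + 2 * M * D ^ N" shows "X \<le> Y"
proof -
  have "(\<lambda>N. D ^ N) \<longlonglongrightarrow> 0" using D0 D1 by (intro LIMSEQ_power_zero) (simp add: abs_if)
  then have "(\<lambda>N. Y + 2 * M * D ^ N) \<longlonglongrightarrow> Y + 2 * M * 0"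
    by (intro tendsto_add tendsto_const tendsto_mult) assumption
  then have "(\<lambda>N. Y + 2 * M * D ^ N) \<longlonglongrightarrow> Y" by simp
  then show ?thesis by (rule LIMSEQ_le_const) (use assms in auto)
qed

lemma onesided: assumes C: "C \<ge> E + cs" and Cb: "(C - E) * m powr \<alpha> \<ge> 2 * M" and t: "t \<in> {0..1}"
  shows "\<bar>f t - f 0\<bar> \<le> phi C t" "\<bar>f t - f 1\<bar> \<le> phi C (1 - t)"
  using onesided_N[OF C Cb] t by (auto intro: lim_err)

lemma find_k: assumes x: "x \<in> {0..1}"
  shows "\<exists>k. 1 \<le> k \<and> k \<le> n \<and> al k \<le> x \<and> x \<le> al (Suc k)"
proof -
  define K where "K = {k\<in>{1..n}. al k \<le> x}"
  have fin: "finite K" unfolding K_def by simp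
  have ne: "1 \<in> K" unfolding K_def using n2 al1 x by auto
  define k where "k = Max K"
  have kK: "k \<in> K" unfolding k_def using fin ne Max_in by auto
  then have k: "1 \<le> k" "k \<le> n" "al k \<le> x" unfolding K_def by auto
  have "x \<le> al (Suc k)"
  proof (cases "k = n")
    case True then show ?thesis using alend x by simp
  next
    case False
    show ?thesis
    proof (rule ccontr)
      assume "\<not> x \<le> al (Suc k)"
      then have "Suc k \<in> K" unfolding K_def using k False by auto
      then have "Suc k \<le> k" unfolding k_def using fin by (simp add: Max_ge)
      then show False by simp
    qed
  qed
  then show ?thesis using k by blast
qed

lemma phi_le: assumes "0 \<le> h" shows "phi C h \<le> C * h powr \<alpha>"
  unfolding phi_def using E0 assms by simp

lemma twosided_N: assumes C: "C \<ge> E + cs" and Cb: "(C - E) * m powr \<alpha> \<ge> 2 * M"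
  shows "\<forall>x\<in>{0..1}. \<forall>y\<in>{0..1}. x \<le> y \<longrightarrow> \<bar>f x - f y\<bar> \<le> phi (2 * C + E) (y - x) + 2 * M * D ^ N"
proof (induction N)
  case 0
  have CE: "2 * C + E \<ge> E" using C cs_def E0 by (smt (verit) sum_nonneg abs_ge_zero)
  show ?case
  proof (intro ballI impI)
    fix x y :: real assume xy: "x \<in> {0..1}" "y \<in> {0..1}" "x \<le> y"
    have "\<bar>f x - f y\<bar> \<le> 2 * M" using f2M xy by auto
    moreover have "phi (2 * C + E) (y - x) \<ge> 0" using phi_nonneg[OF CE] xy by auto
    ultimately show "\<bar>f x - f y\<bar> \<le> phi (2 * C + E) (y - x) + 2 * M * D ^ 0" by simp
  qed
next
  case (Suc N)
  have cs0: "cs \<ge> 0" unfolding cs_def by (simp add: sum_nonneg)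
  have C0: "C \<ge> 0" using C cs0 E0 by simp
  have C2: "2 * C + E \<ge> E + cs" using C cs0 E0 by simp
  have C2E: "2 * C + E \<ge> E" using C0 by simp
  have C2b: "(2 * C + E - E) * m powr \<alpha> \<ge> 2 * M"
    using Cb E0 C0 by (smt (verit) mult_right_mono powr_ge_zero)
  have eN: "2 * M * D ^ N \<ge> 0" using M0 D0 by simp
  have eS: "D * (2 * M * D ^ N) = 2 * M * D ^ Suc N" by simp
  have eS0: "2 * M * D ^ Suc N \<ge> 0" using M0 D0 by simp
  show ?case
  proof (intro ballI impI)
    fix x y :: real assume x: "x \<in> {0..1}" and y: "y \<in> {0..1}" and xy: "x \<le> y"
    obtain k where k: "1 \<le> k" "k \<le> n" "al k \<le> x" "x \<le> al (Suc k)" using find_k[OF x] by blast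
    have ak: "a k > 0" using apos' k by simp
    have alS: "al (Suc k) = al k + a k" using alSuc k by simp
    show "\<bar>f x - f y\<bar> \<le> phi (2 * C + E) (y - x) + 2 * M * D ^ Suc N"
    proof (cases "y \<le> al (Suc k)")
      case True
      define u where "u = (x - al k) / a k"
      define v where "v = (y - al k) / a k"
      have u: "u \<in> {0..1}" unfolding u_def using k ak alS by (auto simp: field_simps)
      have v: "v \<in> {0..1}" unfolding v_def using k ak alS xy True by (auto simp: field_simps)
      have uv: "u \<le> v" unfolding u_def v_def using ak xy by (simp add: divide_right_mono)
      have "\<bar>u - v\<bar> = v - u" using uv by simp
      moreover have "\<bar>f u - f v\<bar> \<le> phi (2 * C + E) (v - u) + 2 * M * D ^ N"
        using Suc u v uv by blast
      ultimately have "\<bar>f u - f v\<bar> \<le> phi (2 * C + E) \<bar>u - v\<bar> + 2 * M * D ^ N" by simp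
      from scale[OF C2 k(1,2) u v eN this]
      have "\<bar>f (ss_S a k u) - f (ss_S a k v)\<bar> \<le> phi (2 * C + E) (a k * \<bar>u - v\<bar>) + D * (2 * M * D ^ N)" .
      moreover have "ss_S a k u = x" "ss_S a k v = y" "a k * \<bar>u - v\<bar> = y - x"
        unfolding ss_S_def u_def v_def using ak xy by (auto simp: field_simps abs_if)
      ultimately show ?thesis using eS by simp
    next
      case False
      note yp = False
      show ?thesis
      proof (cases "y - x < m")
        case True
        have kn: "k < n"
        proof (rule ccontr)
          assume "\<not> k < n" then have "k = n" using k by simp
          then show False using yp alend y by simp
        qed
        define p where "p = al (Suc k)"
        have k1: "1 \<le> Suc k" "Suc k \<le> n" using kn by auto
        have ak1: "a (Suc k) > 0" "m \<le> a (Suc k)" using apos' ma k1 by auto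
        have alS1: "al (Suc (Suc k)) = p + a (Suc k)" unfolding p_def using alSuc k1 by simp
        have ypp: "y \<le> p + a (Suc k)" using True ak1 k(4) unfolding p_def by simp
        define u where "u = (x - al k) / a k"
        have u: "u \<in> {0..1}" unfolding u_def using k ak alS by (auto simp: field_simps)
        have "\<bar>u - 1\<bar> = 1 - u" using u by simp
        then have "\<bar>f u - f 1\<bar> \<le> phi C \<bar>u - 1\<bar> + 0"
          using onesided(2)[OF C Cb u] by simp
        from scale[OF C k(1,2) u _ _ this]
        have "\<bar>f (ss_S a k u) - f (ss_S a k 1)\<bar> \<le> phi C (a k * \<bar>u - 1\<bar>) + D * 0" by simp
        moreover have "ss_S a k u = x" "ss_S a k 1 = p"
          unfolding ss_S_def u_def p_def alS using ak k by (auto simp: field_simps)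
        moreover have "a k * \<bar>u - 1\<bar> = p - x"
          using \<open>\<bar>u - 1\<bar> = 1 - u\<close> ak unfolding u_def p_def alS by (simp add: field_simps)
        ultimately have A: "\<bar>f x - f p\<bar> \<le> phi C (p - x)" by simp
        define v where "v = (y - p) / a (Suc k)"
        have v: "v \<in> {0..1}" unfolding v_def using yp ypp ak1 p_def by (auto simp: field_simps)
        have "\<bar>f v - f 0\<bar> \<le> phi C \<bar>v - 0\<bar> + 0"
          using onesided(1)[OF C Cb v] v by simp
        from scale[OF C k1 v _ _ this]
        have "\<bar>f (ss_S a (Suc k) v) - f (ss_S a (Suc k) 0)\<bar> \<le> phi C (a (Suc k) * \<bar>v - 0\<bar>) + D * 0" by simp
        moreover have "ss_S a (Suc k) v = y" "ss_S a (Suc k) 0 = p" "a (Suc k) * \<bar>v - 0\<bar> = y - p"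
          unfolding ss_S_def v_def p_def using ak1 yp p_def by (auto simp: field_simps abs_if)
        ultimately have B: "\<bar>f y - f p\<bar> \<le> phi C (y - p)" by simp
        have px: "0 \<le> p - x" "p - x \<le> y - x" "0 \<le> y - p" "y - p \<le> y - x"
          using k yp unfolding p_def by auto
        have "phi C (p - x) \<le> C * (y - x) powr \<alpha>"
          using phi_le[of "p - x" C] px powr_mono2[of \<alpha> "p - x" "y - x"] alpha_pos C0
          by (smt (verit) mult_left_mono)
        moreover have "phi C (y - p) \<le> C * (y - x) powr \<alpha>"
          using phi_le[of "y - p" C] px powr_mono2[of \<alpha> "y - p" "y - x"] alpha_pos C0
          by (smt (verit) mult_left_mono)
        moreover have "phi (2 * C + E) (y - x) \<ge> 2 * C * (y - x) powr \<alpha>"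
          using phi_ge[OF C2E, of "y - x"] x y xy by simp
        ultimately show ?thesis using A B eS0 by linarith
      next
        case False
        then have "phi (2 * C + E) (y - x) \<ge> 2 * M" using phi_big[OF C2b C2E] x y by auto
        moreover have "\<bar>f x - f y\<bar> \<le> 2 * M" using f2M x y by simp
        ultimately show ?thesis using eS0 by linarith
      qed
    qed
  qed
qed

lemma holder: "\<exists>C\<ge>0. \<forall>x\<in>{0..1}. \<forall>y\<in>{0..1}. \<bar>f x - f y\<bar> \<le> C * \<bar>x - y\<bar> powr \<alpha>"
proof -
  define C1 where "C1 = E + cs + 2 * M / m powr \<alpha>"
  have cs0: "cs \<ge> 0" unfolding cs_def by (simp add: sum_nonneg)
  have mp: "m powr \<alpha> > 0" using m0 by simp
  have q: "2 * M / m powr \<alpha> \<ge> 0" using M0 mp by simp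
  have C: "C1 \<ge> E + cs" unfolding C1_def using q by simp
  have "(C1 - E) * m powr \<alpha> = cs * m powr \<alpha> + 2 * M" unfolding C1_def using mp
    by (simp add: field_simps)
  then have Cb: "(C1 - E) * m powr \<alpha> \<ge> 2 * M" using cs0 mp by simp
  define C where "C = 2 * C1 + E"
  have C0: "C \<ge> 0" unfolding C_def using C E0 cs0 by simp
  have main: "\<bar>f x - f y\<bar> \<le> C * (y - x) powr \<alpha>" if "x \<in> {0..1}" "y \<in> {0..1}" "x \<le> y" for x y
  proof -
    have "\<bar>f x - f y\<bar> \<le> phi (2 * C1 + E) (y - x) + 2 * M * D ^ N" for N
    proof -
      have "\<forall>x\<in>{0..1}. \<forall>y\<in>{0..1}. x \<le> y \<longrightarrow> \<bar>f x - f y\<bar> \<le> phi (2 * C1 + E) (y - x) + 2 * M * D ^ N"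
        by (rule twosided_N[OF C Cb])
      then show ?thesis using that by simp
    qed
    then have "\<bar>f x - f y\<bar> \<le> phi C (y - x)" unfolding C_def by (rule lim_err)
    also have "\<dots> \<le> C * (y - x) powr \<alpha>" using phi_le that by simp
    finally show ?thesis .
  qed
  have "\<forall>x\<in>{0..1}. \<forall>y\<in>{0..1}. \<bar>f x - f y\<bar> \<le> C * \<bar>x - y\<bar> powr \<alpha>"
  proof (intro ballI)
    fix x y :: real assume xy: "x \<in> {0..1}" "y \<in> {0..1}"
    show "\<bar>f x - f y\<bar> \<le> C * \<bar>x - y\<bar> powr \<alpha>"
    proof (cases "x \<le> y")
      case True
      then have "\<bar>x - y\<bar> = y - x" by simp
      then show ?thesis using main[OF xy True] by simp
    next
      case False
      then have "\<bar>x - y\<bar> = x - y" by simp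
      moreover have "\<bar>f x - f y\<bar> = \<bar>f y - f x\<bar>" by (rule abs_minus_commute)
      ultimately show ?thesis using main[OF xy(2,1)] False by simp
    qed
  qed
  then show ?thesis using C0 by blast
qed

end

lemma powr_bound: fixes A \<delta> \<alpha> :: real
  assumes "0 < A" "A < 1" "0 < \<delta>" "\<alpha> \<le> ln \<delta> / ln A" shows "\<delta> \<le> A powr \<alpha>"
proof -
  have l: "ln A < 0" using assms by simp
  then have "ln \<delta> \<le> \<alpha> * ln A" using assms(4) by (simp add: le_divide_eq)
  then have "exp (ln \<delta>) \<le> exp (\<alpha> * ln A)" by simp
  then show ?thesis using assms by (simp add: powr_def)
qed

theorem theorem2:
  fixes n :: nat and a c d \<beta> :: "nat \<Rightarrow> real" and f :: "real \<Rightarrow> real" and \<alpha> :: real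
  assumes n2: "n \<ge> 2"
    and apos: "\<forall>k\<in>{1..n}. a k > 0"
    and asum: "(\<Sum>k=1..n. a k) = 1"
    and dlt: "\<forall>k\<in>{1..n}. \<bar>d k\<bar> < 1"
    and fcont: "continuous_on {0..1} f"
    and ffix: "\<forall>t\<in>{0..1}. f t = ss_G n a c d \<beta> f t"
    and ex_i: "\<exists>i\<in>{1..n}. \<bar>d i\<bar> > a i"
    and alpha_pos: "0 < \<alpha>" and alpha_le1: "\<alpha> \<le> 1"
    and alpha_le: "\<forall>j\<in>{1..n}. d j \<noteq> 0 \<longrightarrow> \<alpha> \<le> ln \<bar>d j\<bar> / ln (a j)"
  shows "\<exists>C\<ge>0. \<forall>x\<in>{0..1}. \<forall>y\<in>{0..1}. \<bar>f x - f y\<bar> \<le> C * \<bar>x - y\<bar> powr \<alpha>"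
proof -
  interpret S: ssf n a c d \<beta> f using assms by unfold_locales auto
  have dle: "\<forall>k\<in>{1..n}. \<bar>d k\<bar> \<le> a k powr \<alpha>"
  proof
    fix k assume k: "k \<in> {1..n}"
    have ak: "0 < a k" "a k < 1" using apos S.a_lt1 k by auto
    show "\<bar>d k\<bar> \<le> a k powr \<alpha>"
    proof (cases "d k = 0")
      case True then show ?thesis by simp
    next
      case False
      then show ?thesis using powr_bound[OF ak, of "\<bar>d k\<bar>" \<alpha>] alpha_le k by simp
    qed
  qed
  have alt1: "\<alpha> < 1"
  proof (rule ccontr)
    assume "\<not> \<alpha> < 1"
    then have "\<alpha> = 1" using alpha_le1 by simp
    moreover obtain i where i: "i \<in> {1..n}" "\<bar>d i\<bar> > a i" using ex_i by blast
    moreover have "a i > 0" using apos i by auto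
    moreover have "\<bar>d i\<bar> \<le> a i powr \<alpha>" using dle i(1) by blast
    ultimately show False by simp
  qed
  obtain M where Mb: "\<forall>x\<in>{0..1}. \<bar>f x\<bar> \<le> M"
  proof -
    have "compact (f ` {0..1})" by (rule compact_continuous_image[OF fcont]) simp
    then have "bounded (f ` {0..1})" by (rule compact_imp_bounded)
    then obtain M where "\<forall>y\<in>f ` {0..1}. \<bar>y\<bar> \<le> M" by (auto simp: bounded_real)
    then show ?thesis using that by auto
  qed
  define D where "D = Max ((\<lambda>k. \<bar>d k\<bar>) ` {1..n})"
  have ne: "{1..n} \<noteq> {}" using n2 by simp
  have Dd: "\<forall>k\<in>{1..n}. \<bar>d k\<bar> \<le> D" unfolding D_def by (auto intro: Max_ge)
  have D1: "D < 1"
  proof -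
    have "D \<in> (\<lambda>k. \<bar>d k\<bar>) ` {1..n}" unfolding D_def using ne by (intro Max_in) auto
    then show ?thesis using dlt by auto
  qed
  have D0: "0 \<le> D" using Dd ne by force
  define m where "m = Min (a ` {1..n})"
  have ma: "\<forall>k\<in>{1..n}. m \<le> a k" unfolding m_def by (auto intro: Min_le)
  have m0: "0 < m"
  proof -
    have "m \<in> a ` {1..n}" unfolding m_def using ne by (intro Min_in) auto
    then show ?thesis using apos by auto
  qed
  interpret H: ssh n a c d \<beta> f \<alpha> M D m
    using alpha_pos alt1 dle Mb D0 D1 Dd m0 ma by unfold_locales auto
  show ?thesis by (rule H.holder)
qed

end
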